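(* Let $\alpha>0$, and let $N^\pm(\alpha)$, $\sigma$ be as in the context. Let $N:\mathbb R\to\mathbb R$ be the $\alpha$-periodic function with $N(t)=N^+(\alpha)e^{-t}$ for $t\in(0,\alpha)$, and define, for $s\ge0$, $t\in\mathbb R$, $$n(s,t)=N(t-s)\exp\Big(-\int_0^s\mathbf 1_{\{u>\sigma(N(t-s+u))\}}\,du\Big),$$ the periodic solution of $\partial_t n+\partial_s n+\mathbf 1_{\{s>\sigma(N(t))\}}n=0$, $n(0,t)=N(t)$. Then for every $t\in\mathbb R$ at which $N$ is continuous, $$N(t)=\int_{\sigma(N(t))}^\infty n(s,t)\,ds\qquad\text{and}\qquad\int_0^\infty n(s,t)\,ds=1,$$ i.e. $(n,N)$ is a periodic solution of the nonlinear model with $p(s,x)=\mathbf 1_{\{s>\sigma(x)\}}$.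
   Context: For $\alpha>0$: $N^-(\alpha)=\frac1{2e^\alpha-1}$, $N^+(\alpha)=\frac{e^\alpha}{2e^\alpha-1}$ (so $0<N^-<N^+<1$), and $\sigma(x)=2\alpha$ for $x\in[0,N^-(\alpha)]$, $\sigma(x)=2\alpha-\ln x+\ln N^-(\alpha)$ for $x\in[N^-(\alpha),N^+(\alpha)]$, $\sigma(x)=\alpha$ for $x\ge N^+(\alpha)$. *)

theory Defs
  imports "HOL-Analysis.Analysis"
begin

definition Nminus :: "real \<Rightarrow> real" where
  "Nminus \<alpha> = 1 / (2 * exp \<alpha> - 1)"

definition Nplus :: "real \<Rightarrow> real" where
  "Nplus \<alpha> = exp \<alpha> / (2 * exp \<alpha> - 1)"

text \<open>The threshold function sigma (the value for x < 0 is irrelevant; we use 2 alpha).\<close>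
definition sigma :: "real \<Rightarrow> real \<Rightarrow> real" where
  "sigma \<alpha> x =
     (if x \<le> Nminus \<alpha> then 2 * \<alpha>
      else if x \<le> Nplus \<alpha> then 2 * \<alpha> - ln x + ln (Nminus \<alpha>)
      else \<alpha>)"

definition nsol :: "real \<Rightarrow> (real \<Rightarrow> real) \<Rightarrow> real \<Rightarrow> real \<Rightarrow> real" where
  "nsol \<alpha> N s t =
     N (t - s) * exp (- integral {0..s} (\<lambda>u. if u > sigma \<alpha> (N (t - s + u)) then 1 else 0))"

end

theory Submission imports Defs begin

lemma neg_range: "negligible (range (\<lambda>m::int. c + of_int m * (a::real)))"
proof -
  have "range (\<lambda>m::int. c + of_int m * a) = \<Union>((\<lambda>m. {c + of_int m * a}) ` UNIV)" by auto
  moreover have "negligible (\<Union>((\<lambda>m::int. {c + of_int m * a}) ` UNIV))"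
    by (rule negligible_countable_Union) auto
  ultimately show ?thesis by simp
qed

lemma exp_int: "(a::real) \<le> b \<Longrightarrow> ((\<lambda>s. c * exp (s - d)) has_integral (c * (exp (b - d) - exp (a - d)))) {a..b}"
proof -
  assume ab: "a \<le> b"
  have "((\<lambda>s. c * exp (s - d)) has_integral ((\<lambda>s. c * exp (s - d)) b - (\<lambda>s. c * exp (s - d)) a)) {a..b}"
    apply (rule fundamental_theorem_of_calculus[OF ab])
    apply (subst has_real_derivative_iff_has_vector_derivative[symmetric])
    by (auto intro!: derivative_eq_intros)
  thus ?thesis by (simp add: algebra_simps)
qed

lemma spike_open: "(\<And>x. x \<in> {a<..<b} \<Longrightarrow> f x = g x) \<Longrightarrow> (g has_integral I) {a..b} \<Longrightarrow> (f has_integral I) {a..(b::real)}"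
  by (rule has_integral_spike_finite[of "{a,b}"]) auto

lemma step_int: assumes "0 \<le> c" "c \<le> s"
  shows "((\<lambda>u::real. if u > c then 1 else 0::real) has_integral (s - c)) {0..s}"
proof -
  have 1: "((\<lambda>u::real. if u > c then 1 else 0::real) has_integral 0) {0..c}"
    by (rule has_integral_spike_finite[OF _ _ has_integral_0[of "{0..c}"], of "{}"]) auto
  have "((\<lambda>u::real. 1::real) has_integral (s - c)) {c..s}"
    using has_integral_const_real[of "1::real" c s] assms by simp
  note h = this
  have 2: "((\<lambda>u::real. if u > c then 1 else 0::real) has_integral (s - c)) {c..s}"
    by (rule has_integral_spike_finite[OF _ _ h, of "{c}"]) auto
  show ?thesis using has_integral_combine[OF assms 1 2] by simp
qed

lemma limit_int:
  fixes f :: "real \<Rightarrow> real"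
  assumes a: "a > 0" and E: "negligible E"
    and nn: "\<And>x. x \<in> {b..} - E \<Longrightarrow> f x \<ge> 0"
    and I: "\<And>k. (f has_integral S k) {b..b + real k * a}"
    and L: "S \<longlonglongrightarrow> L"
  shows "(f has_integral L) {b..}"
proof -
  define f' where "f' x = (if x \<in> E then 0 else f x)" for x
  define g where "g k x = (if x \<in> {b..b + real k * a} then f' x else 0)" for k x
  have I': "(f' has_integral S k) {b..b + real k * a}" for k
    by (rule has_integral_spike[OF E _ I[of k]]) (auto simp: f'_def)
  have gI: "(g k has_integral S k) {b..}" for k
    unfolding g_def using I'[of k] by (subst has_integral_restrict) auto
  have nn': "x \<ge> b \<Longrightarrow> f' x \<ge> 0" for x using nn by (auto simp: f'_def)
  have mono: "g k x \<le> g (Suc k) x" if "x \<in> {b..}" for k x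
    using nn'[of x] that a by (auto simp: g_def algebra_simps)
  have lim: "(\<lambda>k. g k x) \<longlonglongrightarrow> f' x" if "x \<in> {b..}" for x
  proof -
    obtain n :: nat where n: "(x - b) / a < real n" using reals_Archimedean2 by blast
    have "eventually (\<lambda>k. g k x = f' x) sequentially"
    proof (rule eventually_sequentiallyI[of n])
      fix k assume "n \<le> k"
      hence "(x - b) / a < real k" using n by linarith
      hence "x - b < real k * a" using a by (simp add: divide_less_eq)
      thus "g k x = f' x" using that by (auto simp: g_def)
    qed
    thus ?thesis by (rule tendsto_eventually)
  qed
  have h: "(f' has_integral L) {b..}"
    by (rule has_integral_monotone_convergence_increasing[OF gI mono lim L])
  show ?thesis by (rule has_integral_spike[OF E _ h]) (auto simp: f'_def)
qed


locale per =
  fixes a :: real and N :: "real \<Rightarrow> real"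
  assumes apos: "a > 0" and per: "\<And>x. N (x + a) = N x"
    and base: "\<And>x. x \<in> {0<..<a} \<Longrightarrow> N x = Nplus a * exp (- x)"
begin

lemma Nm_pos: "Nminus a > 0"
proof -
  have "exp a > 1" using apos by simp
  hence "2 * exp a - 1 > 0" by linarith
  thus ?thesis by (simp add: Nminus_def)
qed

lemma Np_eq: "Nplus a = exp a * Nminus a"
  by (simp add: Nplus_def Nminus_def)

lemma Np_pos: "Nplus a > 0" using Np_eq Nm_pos by simp

lemma per_nat: "N (x + real n * a) = N x"
proof (induction n)
  case (Suc n)
  have "N (x + real (Suc n) * a) = N ((x + real n * a) + a)" by (simp add: algebra_simps)
  also have "\<dots> = N x" using per Suc by simp
  finally show ?case .
qed simp

lemma per_int: "N (x + of_int m * a) = N x"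
proof (cases "m \<ge> 0")
  case True
  then obtain n where "m = int n" by (metis nonneg_eq_int)
  thus ?thesis using per_nat by simp
next
  case False
  define n where "n = nat (- m)"
  have m: "m = - int n" using False by (simp add: n_def)
  have "N x = N ((x + of_int m * a) + real n * a)" by (simp add: m algebra_simps)
  thus ?thesis using per_nat by simp
qed

lemma sigma_val: assumes "r \<in> {0<..<a}" shows "sigma a (Nplus a * exp (- r)) = a + r"
proof -
  have r: "0 < r" "r < a" using assms by auto
  have "Nplus a * exp (- r) > Nminus a"
  proof -
    have "exp (a - r) > 1" using r by simp
    hence "Nminus a * exp (a - r) > Nminus a" using Nm_pos by simp
    moreover have "Nminus a * exp (a - r) = Nplus a * exp (- r)"
      using Np_eq by (simp add: exp_diff exp_minus field_simps)
    ultimately show ?thesis by simp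
  qed
  moreover have "Nplus a * exp (- r) \<le> Nplus a" using r Np_pos by simp
  moreover have "ln (Nplus a * exp (- r)) = a + ln (Nminus a) - r"
    using Np_eq Nm_pos by (simp add: ln_mult)
  ultimately show ?thesis by (simp add: sigma_def)
qed

lemma floor_bounds: "a * of_int \<lfloor>w / a\<rfloor> \<le> w" "w < a * (of_int \<lfloor>w / a\<rfloor> + 1)"
proof -
  have "of_int \<lfloor>w / a\<rfloor> \<le> w / a" by simp
  thus "a * of_int \<lfloor>w / a\<rfloor> \<le> w" using apos by (simp add: le_divide_eq mult.commute)
  have "w / a < of_int \<lfloor>w / a\<rfloor> + 1" by simp
  thus "w < a * (of_int \<lfloor>w / a\<rfloor> + 1)" using apos by (simp add: divide_less_eq algebra_simps)
qed

lemma floor_eqI: assumes "a * of_int m \<le> w" "w < a * (of_int m + 1)" shows "\<lfloor>w / a\<rfloor> = m"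
proof -
  have "of_int m \<le> w / a" using assms apos by (simp add: le_divide_eq mult.commute)
  moreover have "w / a < of_int m + 1" using assms apos by (simp add: divide_less_eq mult.commute)
  ultimately show ?thesis by (simp add: floor_eq_iff)
qed

lemma N_gen: assumes "w \<noteq> a * of_int \<lfloor>w / a\<rfloor>"
  shows "N w = Nplus a * exp (- (w - a * of_int \<lfloor>w / a\<rfloor>))"
    and "w - a * of_int \<lfloor>w / a\<rfloor> \<in> {0<..<a}"
proof -
  define r where "r = w - a * of_int \<lfloor>w / a\<rfloor>"
  show rr: "w - a * of_int \<lfloor>w / a\<rfloor> \<in> {0<..<a}" using floor_bounds[of w] assms by (auto simp: algebra_simps)
  have "N w = N (r + of_int \<lfloor>w / a\<rfloor> * a)" by (simp add: r_def)
  also have "\<dots> = N r" by (rule per_int)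
  also have "\<dots> = Nplus a * exp (- r)" using rr base by (simp add: r_def)
  finally show "N w = Nplus a * exp (- (w - a * of_int \<lfloor>w / a\<rfloor>))" by (simp add: r_def)
qed

lemma sig_gen: assumes "w \<noteq> a * of_int \<lfloor>w / a\<rfloor>"
  shows "sigma a (N w) = a + w - a * of_int \<lfloor>w / a\<rfloor>"
  using N_gen[OF assms] sigma_val[of "w - a * of_int \<lfloor>w / a\<rfloor>"] by simp

lemma gcond: assumes "u \<notin> range (\<lambda>m::int. s - t + of_int m * a)"
  shows "(u > sigma a (N (t - s + u))) \<longleftrightarrow> a * of_int \<lfloor>(t - s + u) / a\<rfloor> > a + t - s"
proof -
  have "t - s + u \<noteq> a * of_int \<lfloor>(t - s + u) / a\<rfloor>"
  proof
    assume "t - s + u = a * of_int \<lfloor>(t - s + u) / a\<rfloor>"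
    hence "u = s - t + of_int \<lfloor>(t - s + u) / a\<rfloor> * a" by (simp add: algebra_simps)
    thus False using assms by auto
  qed
  from sig_gen[OF this] show ?thesis by auto
qed

end

context per begin

lemma noexc: assumes "u \<notin> range (\<lambda>m::int. s - t + of_int m * a)"
  shows "t - s + u \<noteq> a * of_int \<lfloor>(t - s + u) / a\<rfloor>"
proof
  assume "t - s + u = a * of_int \<lfloor>(t - s + u) / a\<rfloor>"
  hence "u = s - t + of_int \<lfloor>(t - s + u) / a\<rfloor> * a" by (simp add: algebra_simps)
  thus False using assms by auto
qed

context fixes t assumes t: "0 < t" "t < a" begin

abbreviation "gi s u \<equiv> (if u > sigma a (N (t - s + u)) then 1 else (0::real))"

lemma IA: assumes "0 \<le> s" "s < t" shows "integral {0..s} (gi s) = 0"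
proof -
  have "integral {0..s} (gi s) = integral {0..s} (\<lambda>u. 0)"
  proof (rule integral_spike[OF neg_range[of "s - t" a]])
    fix u assume u: "u \<in> {0..s} - range (\<lambda>m::int. s - t + of_int m * a)"
    have "\<lfloor>(t - s + u) / a\<rfloor> = 0" by (rule floor_eqI) (use u assms t in auto)
    thus "0 = gi s u" using gcond[of u s t] u assms t by auto
  qed
  thus ?thesis by simp
qed

lemma IB: assumes "t < s" "s < t + a" shows "integral {0..s} (gi s) = 0"
proof -
  have "integral {0..s} (gi s) = integral {0..s} (\<lambda>u. 0)"
  proof (rule integral_spike[OF neg_range[of "s - t" a]])
    fix u assume u: "u \<in> {0..s} - range (\<lambda>m::int. s - t + of_int m * a)"
    show "0 = gi s u"
    proof (cases "t - s + u \<ge> 0")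
      case True
      have "\<lfloor>(t - s + u) / a\<rfloor> = 0" by (rule floor_eqI) (use u assms t True in auto)
      thus ?thesis using gcond[of u s t] u assms t by auto
    next
      case False
      have "\<lfloor>(t - s + u) / a\<rfloor> = -1" by (rule floor_eqI) (use u assms t False in auto)
      thus ?thesis using gcond[of u s t] u assms t by auto
    qed
  qed
  thus ?thesis by simp
qed

lemma IC: assumes "t + a + real j * a < s" "s < t + a + real (Suc j) * a"
  shows "integral {0..s} (gi s) = t + real j * a"
proof -
  have "integral {0..s} (gi s) = integral {0..s} (\<lambda>u. if u > s - t - real j * a then 1 else 0)"
  proof (rule integral_spike[OF neg_range[of "s - t" a]])
    fix u assume u: "u \<in> {0..s} - range (\<lambda>m::int. s - t + of_int m * a)"
    define m where "m = \<lfloor>(t - s + u) / a\<rfloor>"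
    have ne: "t - s + u \<noteq> a * of_int m" using noexc[of u s t] u by (simp add: m_def)
    have b1: "a * of_int m \<le> t - s + u" "t - s + u < a * (of_int m + 1)"
      using floor_bounds[of "t - s + u"] by (auto simp: m_def)
    have "(a * of_int m > a + t - s) \<longleftrightarrow> (u > s - t - real j * a)"
    proof
      assume h: "a * of_int m > a + t - s"
      have "a * of_int m > a * (- real j - 1)" using h assms by (simp add: algebra_simps)
      hence "of_int m > - real j - 1" using apos by simp
      hence "m \<ge> - int j" by linarith
      hence "of_int m \<ge> - real j" by (metis of_int_le_iff of_int_minus of_int_of_nat_eq)
      hence "a * of_int m \<ge> a * (- real j)" by (rule mult_left_mono) (use apos in simp)
      thus "u > s - t - real j * a" using b1 ne by (auto simp: algebra_simps)
    next
      assume h: "u > s - t - real j * a"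
      have "a * (of_int m + 1) > a * (- real j)" using h b1 by (simp add: algebra_simps)
      hence "a * (of_int m + 1) > a * (- real j)" by simp
      hence "of_int m + 1 > - real j" using apos mult_less_cancel_left_pos by blast
      hence "m \<ge> - int j" by linarith
      hence "of_int m \<ge> - real j" by (metis of_int_le_iff of_int_minus of_int_of_nat_eq)
      hence "a * of_int m \<ge> a * (- real j)" by (rule mult_left_mono) (use apos in simp)
      thus "a * of_int m > a + t - s" using assms by (simp add: algebra_simps)
    qed
    thus "(if u > s - t - real j * a then 1 else 0) = gi s u" using gcond[of u s t] u by (simp add: m_def)
  qed
  also have "\<dots> = s - (s - t - real j * a)"
    apply (rule integral_unique, rule step_int)
    using assms t apos by (auto simp: algebra_simps)
  finally show ?thesis by simp
qed

abbreviation "nn s \<equiv> nsol a N s t"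

lemma nA: assumes "0 \<le> s" "s < t" shows "nn s = Nplus a * exp (s - t)"
  using IA[OF assms] base[of "t - s"] assms t by (simp add: nsol_def)

lemma nB: assumes "t < s" "s < t + a" shows "nn s = Nplus a * exp (s - (t + a))"
proof -
  have "N (t - s) = N (t - s + a)" using per by simp
  also have "\<dots> = Nplus a * exp (s - (t + a))" using base[of "t - s + a"] assms by simp
  finally show ?thesis using IB[OF assms] by (simp add: nsol_def)
qed

lemma nC: assumes "t + a + real j * a < s" "s < t + a + real (Suc j) * a"
  shows "nn s = Nplus a * exp (- (t + real j * a)) * exp (s - (t + a + real (Suc j) * a))"
proof -
  have "N (t - s) = N (t - s + of_int (int j + 2) * a)" using per_int[of "t - s" "int j + 2"] by simp
  also have "\<dots> = Nplus a * exp (s - (t + a + real (Suc j) * a))"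
    using base[of "t - s + of_int (int j + 2) * a"] assms by (simp add: algebra_simps)
  finally show ?thesis using IC[OF assms] by (simp add: nsol_def)
qed

end
end

context per begin
context fixes t assumes t: "0 < t" "t < a" begin

lemma PA: "((\<lambda>s. nsol a N s t) has_integral (Nplus a * (1 - exp (- t)))) {0..t}"
proof -
  have "((\<lambda>s. Nplus a * exp (s - t)) has_integral (Nplus a * (exp (t - t) - exp (0 - t)))) {0..t}"
    by (rule exp_int) (use t in simp)
  hence h: "((\<lambda>s. Nplus a * exp (s - t)) has_integral (Nplus a * (1 - exp (- t)))) {0..t}" by simp
  show ?thesis by (rule spike_open[OF _ h]) (use nA[OF t] in auto)
qed

lemma PB: "((\<lambda>s. nsol a N s t) has_integral (Nplus a * (1 - exp (- a)))) {t..t+a}"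
proof -
  have "((\<lambda>s. Nplus a * exp (s - (t + a))) has_integral (Nplus a * (exp ((t + a) - (t + a)) - exp (t - (t + a))))) {t..t+a}"
    by (rule exp_int) (use apos in simp)
  hence h: "((\<lambda>s. Nplus a * exp (s - (t + a))) has_integral (Nplus a * (1 - exp (- a)))) {t..t+a}" by simp
  show ?thesis by (rule spike_open[OF _ h]) (use nB[OF t] in auto)
qed

lemma PC: "((\<lambda>s. nsol a N s t) has_integral (Nplus a * exp (- (t + real j * a)) * (1 - exp (- a))))
   {t + a + real j * a .. t + a + real (Suc j) * a}"
proof -
  let ?c = "Nplus a * exp (- (t + real j * a))" and ?d = "t + a + real (Suc j) * a"
  have "((\<lambda>s. ?c * exp (s - ?d)) has_integral (?c * (exp (?d - ?d) - exp ((t + a + real j * a) - ?d))))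
     {t + a + real j * a .. ?d}"
    by (rule exp_int) (use apos in simp)
  moreover have "(t + a + real j * a) - ?d = - a" by (simp add: algebra_simps)
  ultimately have h: "((\<lambda>s. ?c * exp (s - ?d)) has_integral (?c * (1 - exp (- a))))
     {t + a + real j * a .. ?d}" by simp
  show ?thesis by (rule spike_open[OF _ h]) (use nC[OF t] in auto)
qed

lemma Psum: "((\<lambda>s. nsol a N s t) has_integral (Nplus a * exp (- t) * (1 - exp (- (real k * a)))))
   {t + a .. t + a + real k * a}"
proof (induction k)
  case 0
  show ?case using has_integral_refl(1)[of "\<lambda>s. nsol a N s t" "t + a"] by simp
next
  case (Suc k)
  have h: "((\<lambda>s. nsol a N s t) has_integral
     (Nplus a * exp (- t) * (1 - exp (- (real k * a))) + Nplus a * exp (- (t + real k * a)) * (1 - exp (- a))))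
     {t + a .. t + a + real (Suc k) * a}"
    by (rule has_integral_combine[OF _ _ Suc PC]) (use apos in auto)
  have e1: "exp (- (t + real k * a)) = exp (- t) * exp (- (real k * a))" by (simp add: exp_add[symmetric])
  have e2: "exp (- (real (Suc k) * a)) = exp (- (real k * a)) * exp (- a)"
    by (simp add: exp_add[symmetric] algebra_simps)
  have "Nplus a * exp (- t) * (1 - exp (- (real k * a))) + Nplus a * exp (- (t + real k * a)) * (1 - exp (- a))
      = Nplus a * exp (- t) * (1 - exp (- (real (Suc k) * a)))"
    unfolding e1 e2 by (simp add: algebra_simps)
  with h show ?case by simp
qed

lemma nonneg: assumes "s \<notin> range (\<lambda>m::int. t + of_int m * a)" shows "nsol a N s t \<ge> 0"
proof -
  have "t - s \<noteq> a * of_int \<lfloor>(t - s) / a\<rfloor>"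
  proof
    assume "t - s = a * of_int \<lfloor>(t - s) / a\<rfloor>"
    hence "s = t + of_int (- \<lfloor>(t - s) / a\<rfloor>) * a" by (simp add: algebra_simps)
    thus False using assms by blast
  qed
  from N_gen(1)[OF this] Np_pos have "N (t - s) \<ge> 0" by simp
  thus ?thesis by (simp add: nsol_def)
qed

lemma tail: "((\<lambda>s. nsol a N s t) has_integral (Nplus a * exp (- t))) {t + a..}"
proof (rule limit_int[OF apos neg_range[of t a] _ Psum])
  show "\<And>x. x \<in> {t + a..} - range (\<lambda>m::int. t + of_int m * a) \<Longrightarrow> 0 \<le> nsol a N x t"
    using nonneg by blast
  have "(\<lambda>k. exp (- (real k * a))) = (\<lambda>k. exp (- a) ^ k)"
    by (rule ext) (simp add: exp_of_nat_mult[symmetric])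
  moreover have "(\<lambda>k. exp (- a) ^ k) \<longlonglongrightarrow> 0"
    by (rule LIMSEQ_power_zero) (use apos in simp)
  ultimately have "(\<lambda>k. exp (- (real k * a))) \<longlonglongrightarrow> 0" by simp
  hence "(\<lambda>k. Nplus a * exp (- t) * (1 - exp (- (real k * a)))) \<longlonglongrightarrow> Nplus a * exp (- t) * (1 - 0)"
    by (intro tendsto_intros)
  thus "(\<lambda>k. Nplus a * exp (- t) * (1 - exp (- (real k * a)))) \<longlonglongrightarrow> Nplus a * exp (- t)" by simp
qed

lemma main_t: "((\<lambda>s. nsol a N s t) has_integral N t) {sigma a (N t)..} \<and>
         ((\<lambda>s. nsol a N s t) has_integral 1) {0..}"
proof
  have Nt: "N t = Nplus a * exp (- t)" using base t by simp
  have sg: "sigma a (N t) = t + a" using sigma_val[of t] t Nt by simp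
  show "((\<lambda>s. nsol a N s t) has_integral N t) {sigma a (N t)..}" using tail sg Nt by simp
  have h1: "((\<lambda>s. nsol a N s t) has_integral (Nplus a * (1 - exp (- t)) + Nplus a * (1 - exp (- a)))) {0..t+a}"
    by (rule has_integral_combine[OF _ _ PA PB]) (use t apos in auto)
  have h2: "((\<lambda>s. nsol a N s t) has_integral (Nplus a * (1 - exp (- t)) + Nplus a * (1 - exp (- a)) + Nplus a * exp (- t)))
     ({0..t+a} \<union> {t + a..})"
  proof (rule has_integral_Un[OF h1 tail])
    have "{0..t+a} \<inter> {t + a..} = {t + a}" using t apos by auto
    thus "negligible ({0..t+a} \<inter> {t + a..})" by simp
  qed
  have "{0..t+a} \<union> {t + a..} = {0..}" using t apos by auto
  moreover have "Nplus a * (1 - exp (- t)) + Nplus a * (1 - exp (- a)) + Nplus a * exp (- t) = 1"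
  proof -
    have "exp a > 1" using apos by simp
    hence "2 * exp a - 1 > 0" by linarith
    have "Nplus a * (1 - exp (- t)) + Nplus a * (1 - exp (- a)) + Nplus a * exp (- t) = Nplus a * (2 - exp (- a))"
      by (simp add: algebra_simps)
    also have "\<dots> = exp a / (2 * exp a - 1) * (2 - 1 / exp a)" by (simp add: Nplus_def exp_minus inverse_eq_divide)
    also have "\<dots> = 1" using \<open>2 * exp a - 1 > 0\<close> by (simp add: field_simps)
    finally show ?thesis .
  qed
  ultimately show "((\<lambda>s. nsol a N s t) has_integral 1) {0..}" using h2 by simp
qed

end
end

theorem mainTheorem11:
  fixes \<alpha> :: real and N :: "real \<Rightarrow> real" and t :: real
  assumes "\<alpha> > 0"
    and "\<And>x. N (x + \<alpha>) = N x"
    and "\<And>x. x \<in> {0<..<\<alpha>} \<Longrightarrow> N x = Nplus \<alpha> * exp (- x)"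
    and "isCont N t"
  shows "((\<lambda>s. nsol \<alpha> N s t) has_integral N t) {sigma \<alpha> (N t)..} \<and>
         ((\<lambda>s. nsol \<alpha> N s t) has_integral 1) {0..}"
proof -
  interpret per \<alpha> N using assms(1-3) by unfold_locales auto
  define k where "k = \<lfloor>t / \<alpha>\<rfloor>"
  have ne: "t \<noteq> \<alpha> * of_int k"
  proof
    assume tk: "t = \<alpha> * of_int k"
    have R: "\<forall>y>t. y < t + \<alpha> \<longrightarrow> N y = Nplus \<alpha> * exp (- (y - t))"
    proof (intro allI impI)
      fix y assume y: "t < y" "y < t + \<alpha>"
      have "N y = N ((y - t) + of_int k * \<alpha>)" using tk by (simp add: algebra_simps)
      also have "\<dots> = N (y - t)" by (rule per_int)
      also have "\<dots> = Nplus \<alpha> * exp (- (y - t))" using base y by simp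
      finally show "N y = Nplus \<alpha> * exp (- (y - t))" .
    qed
    have L: "\<forall>y>t - \<alpha>. y < t \<longrightarrow> N y = Nplus \<alpha> * exp (- (y - t + \<alpha>))"
    proof (intro allI impI)
      fix y assume y: "t - \<alpha> < y" "y < t"
      have "N y = N ((y - t + \<alpha>) + of_int (k - 1) * \<alpha>)" using tk by (simp add: algebra_simps)
      also have "\<dots> = N (y - t + \<alpha>)" by (rule per_int)
      also have "\<dots> = Nplus \<alpha> * exp (- (y - t + \<alpha>))" using base y by simp
      finally show "N y = Nplus \<alpha> * exp (- (y - t + \<alpha>))" .
    qed
    have cR: "(N \<longlongrightarrow> N t) (at_right t)" and cL: "(N \<longlongrightarrow> N t) (at_left t)"
      using assms(4) continuous_at_split[of t N] by (auto simp: continuous_within)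
    have "((\<lambda>y. Nplus \<alpha> * exp (- (y - t))) \<longlongrightarrow> Nplus \<alpha> * exp (- (t - t))) (at_right t)"
      by (intro tendsto_intros tendsto_within_subset[OF tendsto_ident_at]) auto
    moreover have "eventually (\<lambda>y. Nplus \<alpha> * exp (- (y - t)) = N y) (at_right t)"
      unfolding eventually_at_right_field using R assms(1) by (intro exI[of _ "t + \<alpha>"]) auto
    ultimately have "(N \<longlongrightarrow> Nplus \<alpha>) (at_right t)" by (simp add: tendsto_cong)
    hence e1: "N t = Nplus \<alpha>" using tendsto_unique[OF trivial_limit_at_right_real cR] by simp
    have "((\<lambda>y. Nplus \<alpha> * exp (- (y - t + \<alpha>))) \<longlongrightarrow> Nplus \<alpha> * exp (- (t - t + \<alpha>))) (at_left t)"
      by (intro tendsto_intros tendsto_within_subset[OF tendsto_ident_at]) auto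
    moreover have "eventually (\<lambda>y. Nplus \<alpha> * exp (- (y - t + \<alpha>)) = N y) (at_left t)"
      unfolding eventually_at_left_field using L assms(1) by (intro exI[of _ "t - \<alpha>"]) auto
    ultimately have "(N \<longlongrightarrow> Nplus \<alpha> * exp (- \<alpha>)) (at_left t)" by (simp add: tendsto_cong)
    hence e2: "N t = Nplus \<alpha> * exp (- \<alpha>)" using tendsto_unique[OF trivial_limit_at_left_real cL] by simp
    have "exp (- \<alpha>) < 1" using assms(1) by simp
    thus False using e1 e2 Np_pos by simp
  qed
  define t0 where "t0 = t - \<alpha> * of_int k"
  have t0: "0 < t0" "t0 < \<alpha>" using N_gen(2)[of t] ne by (auto simp: t0_def k_def)
  have sh: "\<And>x. N (t + x) = N (t0 + x)"
  proof -
    fix x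
    have "N (t + x) = N ((t0 + x) + of_int k * \<alpha>)" by (simp add: t0_def algebra_simps)
    thus "N (t + x) = N (t0 + x)" using per_int by simp
  qed
  have s1: "N (t - s) = N (t0 - s)" for s using sh[of "- s"] by simp
  have s2: "N (t - s + u) = N (t0 - s + u)" for s u using sh[of "u - s"] by (simp add: algebra_simps)
  have "(\<lambda>s. nsol \<alpha> N s t) = (\<lambda>s. nsol \<alpha> N s t0)" by (rule ext) (simp add: nsol_def s1 s2)
  moreover have "N t = N t0" using sh[of 0] by simp
  ultimately show ?thesis using main_t[OF t0] by simp
qed

end
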